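(* For every nonempty graph $G$ and every integer $t\ge 1$, \[\hat r(tK_2,G)\ge (t-1)\Delta(G)+|E(G)|.\] Consequently, $\hat r_\infty(G)\ge \Delta(G)/|E(G)|$.
   Context: All graphs are finite and simple; a graph is nonempty if it has at least one edge. $\Delta(G)$ is the maximum degree, $tK_2$ is a matching with $t$ edges. For graphs $F,G,H$, $F\to(G,H)$ means every red--blue coloring of $E(F)$ contains a red copy of $G$ or a blue copy of $H$, and $\hat r(G,H)=\min\{|E(F)|:F\to(G,H)\}$. For a nonempty graph $G$, $\hat r_\infty(G)=\lim_{t\to\infty}\frac{\hat r(tK_2,G)}{t\,|E(G)|}$ (this limit exists). *)

theory Defs
  imports Complex_Main
begin

type_synonym 'a graph = "'a set \<times> 'a set set"

definition verts :: "'a graph \<Rightarrow> 'a set" where "verts G = fst G"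
definition edges :: "'a graph \<Rightarrow> 'a set set" where "edges G = snd G"

definition simple_graph :: "'a graph \<Rightarrow> bool" where
  "simple_graph G \<longleftrightarrow> finite (verts G) \<and>
     (\<forall>e\<in>edges G. \<exists>u v. u \<noteq> v \<and> u \<in> verts G \<and> v \<in> verts G \<and> e = {u, v})"

definition degree :: "'a graph \<Rightarrow> 'a \<Rightarrow> nat" where
  "degree G v = card {e \<in> edges G. v \<in> e}"

definition max_degree :: "'a graph \<Rightarrow> nat" where
  "max_degree G = Max (degree G ` verts G)"

definition has_copy :: "'b graph \<Rightarrow> 'a set \<Rightarrow> 'a set set \<Rightarrow> bool" where
  "has_copy H V E \<longleftrightarrow> (\<exists>f. inj_on f (verts H) \<and> f ` verts H \<subseteq> V \<and>
                               (\<forall>e\<in>edges H. f ` e \<in> E))"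

text \<open>F \<rightarrow> (G,H): every red/blue colouring (R = red edges) yields a red G or a blue H.\<close>
definition arrows :: "'a graph \<Rightarrow> 'b graph \<Rightarrow> 'c graph \<Rightarrow> bool" where
  "arrows F G H \<longleftrightarrow> (\<forall>R. R \<subseteq> edges F \<longrightarrow>
      has_copy G (verts F) R \<or> has_copy H (verts F) (edges F - R))"

text \<open>Size Ramsey number; host graphs F range over finite simple graphs on nat vertices
  (every finite graph is isomorphic to one).\<close>
definition size_ramsey :: "'b graph \<Rightarrow> 'c graph \<Rightarrow> nat" where
  "size_ramsey G H = (LEAST m. \<exists>F :: nat graph. simple_graph F \<and> card (edges F) = m \<and> arrows F G H)"

definition matching :: "nat \<Rightarrow> nat graph" where
  "matching t = ({0..<2*t}, {{2*i, 2*i+1} | i. i < t})"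

definition rhat_inf :: "'a graph \<Rightarrow> real" where
  "rhat_inf G = lim (\<lambda>t. real (size_ramsey (matching t) G) / (real t * real (card (edges G))))"

end

theory Submission
  imports Defs
begin


lemma fekete:
  fixes a :: "nat \<Rightarrow> nat"
  assumes sub: "\<And>m n. a (m+n) \<le> a m + a n"
  shows "convergent (\<lambda>n. real (a n) / real n)"
proof -
  define X where "X n = real (a n) / real n" for n
  define L where "L = Inf (X ` {1..})"
  have bdd: "bdd_below (X ` {1..})"
    by (rule bdd_belowI[of _ 0]) (auto simp: X_def)
  have lowL: "L \<le> X n" if "n \<ge> 1" for n
    unfolding L_def using bdd that by (auto intro: cInf_lower)
  have dec: "a (q*m + r) \<le> q * a m + a r" for q m r
  proof (induction q)
    case 0 then show ?case by simp
  next
    case (Suc q)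
    have "a (Suc q * m + r) = a (m + (q*m+r))" by (simp add: add.assoc)
    also have "\<dots> \<le> a m + a (q*m+r)" by (rule sub)
    finally show ?case using Suc by simp
  qed
  have "X \<longlonglongrightarrow> L"
  proof (rule LIMSEQ_I)
    fix \<epsilon> :: real assume ep: "0 < \<epsilon>"
    have "Inf (X ` {1..}) < L + \<epsilon>/2" using ep L_def by simp
    then obtain m where m: "m \<ge> 1" "X m < L + \<epsilon>/2"
      using cInf_lessD[of "X ` {1..}"] by fastforce
    define C where "C = real (Max (a ` {..<m}))"
    have aC: "real (a r) \<le> C" if "r < m" for r
      unfolding C_def using that by auto
    have C0: "C \<ge> 0" unfolding C_def by simp
    obtain N :: nat where N: "real N > 2*C/\<epsilon>" using reals_Archimedean2 by blast
    show "\<exists>no. \<forall>n\<ge>no. norm (X n - L) < \<epsilon>"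
    proof (intro exI[of _ "Suc N"] allI impI)
      fix n assume n: "Suc N \<le> n"
      have n1: "n \<ge> 1" using n by simp
      have "a n \<le> (n div m) * a m + a (n mod m)"
        using dec[of "n div m" m "n mod m"] by simp
      hence "real (a n) \<le> real (n div m * a m) + real (a (n mod m))"
        by (simp only: of_nat_add[symmetric] of_nat_le_iff)
      moreover have "real (a (n mod m)) \<le> C" using aC m(1) by simp
      ultimately have "real (a n) \<le> real (n div m) * real (a m) + C" by simp
      hence "X n \<le> real (n div m) * real (a m) / real n + C / real n"
        unfolding X_def using n1 by (simp add: add_divide_distrib[symmetric] divide_right_mono)
      moreover have "real (n div m) * real (a m) / real n \<le> X m"
      proof -
        have "n div m * m \<le> n" by simp
        hence "real (n div m) * real m \<le> real n" by (metis of_nat_le_iff of_nat_mult)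
        hence hd: "real (n div m) * real m * real (a m) \<le> real n * real (a m)"
          by (simp add: mult_right_mono)
        have m0: "real m > 0" "real n > 0" using m(1) n1 by auto
        show ?thesis unfolding X_def using hd m0
          by (simp add: divide_simps) (simp add: mult_ac)
      qed
      moreover have "C / real n < \<epsilon>/2"
      proof -
        have "2*C/\<epsilon> < real n" using N n by linarith
        hence "2*C < \<epsilon> * real n" using ep by (simp add: divide_simps mult.commute)
        thus ?thesis using n1 by (simp add: divide_simps)
      qed
      ultimately have "X n < L + \<epsilon>" using m by linarith
      moreover have "L \<le> X n" using lowL n1 by blast
      ultimately show "norm (X n - L) < \<epsilon>" by simp
    qed
  qed
  thus ?thesis unfolding convergent_def X_def by blast
qed


definition inc :: "'a set set \<Rightarrow> 'a set \<Rightarrow> 'a set set" where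
  "inc E S = {e\<in>E. e \<inter> S \<noteq> {}}"

lemma verts_matching[simp]: "verts (matching t) = {0..<2*t}"
  by (simp add: matching_def verts_def)
lemma edges_matching[simp]: "edges (matching t) = {{2*i, 2*i+1} | i. i < t}"
  by (simp add: matching_def edges_def)

lemma edges_sub_pow: "simple_graph H \<Longrightarrow> edges H \<subseteq> Pow (verts H)"
proof
  fix e assume s: "simple_graph H" and e: "e \<in> edges H"
  then obtain u v where "u \<in> verts H" "v \<in> verts H" "e = {u, v}"
    unfolding simple_graph_def by metis
  then show "e \<in> Pow (verts H)" by simp
qed

lemma finite_edges: "simple_graph H \<Longrightarrow> finite (edges H)"
proof -
  assume s: "simple_graph H"
  have "edges H \<subseteq> Pow (verts H)" using s by (rule edges_sub_pow)
  moreover have "finite (verts H)" using s unfolding simple_graph_def by simp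
  ultimately show ?thesis using finite_subset by auto
qed

lemma copy_edges:
  assumes "simple_graph H" "has_copy H V E" "finite E"
  shows "card (edges H) \<le> card E"
proof -
  obtain f where f: "inj_on f (verts H)" "f ` verts H \<subseteq> V" "\<forall>e\<in>edges H. f ` e \<in> E"
    using assms(2) unfolding has_copy_def by blast
  have "inj_on (image f) (edges H)"
    using inj_on_image_Pow[OF f(1)] edges_sub_pow[OF assms(1)] inj_on_subset by blast
  then show ?thesis using card_inj_on_le[of "image f" "edges H" E] f(3) assms(3) by blast
qed

lemma copy_deg:
  assumes "simple_graph H" "has_copy H V E" "finite E" "v \<in> verts H"
  shows "\<exists>w\<in>V. degree H v \<le> card {e\<in>E. w \<in> e}"
proof -
  obtain f where f: "inj_on f (verts H)" "f ` verts H \<subseteq> V" "\<forall>e\<in>edges H. f ` e \<in> E"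
    using assms(2) unfolding has_copy_def by blast
  have "{e\<in>edges H. v \<in> e} \<subseteq> Pow (verts H)" using edges_sub_pow[OF assms(1)] by auto
  then have i: "inj_on (image f) {e\<in>edges H. v \<in> e}"
    using inj_on_subset[OF inj_on_image_Pow[OF f(1)]] by blast
  have s: "image f ` {e\<in>edges H. v \<in> e} \<subseteq> {e\<in>E. f v \<in> e}" using f(3) by auto
  have fi: "finite {e\<in>E. f v \<in> e}" using assms(3) by simp
  have "card {e\<in>edges H. v \<in> e} \<le> card {e\<in>E. f v \<in> e}"
    using card_inj_on_le[OF i s fi] .
  then show ?thesis using f(2) assms(4) unfolding degree_def by blast
qed

lemma max_deg_ex:
  assumes "simple_graph H" "edges H \<noteq> {}"
  shows "\<exists>v\<in>verts H. degree H v = max_degree H"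
proof -
  have "verts H \<noteq> {}" using assms unfolding simple_graph_def by blast
  moreover have "finite (verts H)" using assms unfolding simple_graph_def by blast
  ultimately have "Max (degree H ` verts H) \<in> degree H ` verts H" by (intro Max_in) auto
  then show ?thesis unfolding max_degree_def by force
qed

lemma max_deg_le:
  assumes "simple_graph H" "edges H \<noteq> {}"
  shows "max_degree H \<le> card (edges H)"
proof -
  obtain v where v: "v \<in> verts H" "degree H v = max_degree H" using max_deg_ex[OF assms] by blast
  have "degree H v \<le> card (edges H)" unfolding degree_def
    using finite_edges[OF assms(1)] by (intro card_mono) auto
  thus ?thesis using v by simp
qed

lemma no_red_matching:
  assumes "finite S" "card S < t"
  shows "\<not> has_copy (matching t) V (inc E S)"
proof
  assume "has_copy (matching t) V (inc E S)"
  then obtain f where f1: "inj_on f {0..<2*t}" and f2: "\<forall>e\<in>{{2*i, 2*i+1} | i. i < t}. f ` e \<in> inc E S"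
    unfolding has_copy_def by auto
  have f: "inj_on f {0..<2*t}" "\<forall>i<t. f ` {2*i, 2*i+1} \<in> inc E S"
    using f1 f2 by blast+
  define g where "g i = (if f (2*i) \<in> S then f (2*i) else f (2*i+1))" for i
  have gS: "g i \<in> S" if "i < t" for i
    using f(2) that unfolding g_def inc_def by auto
  have "inj_on g {0..<t}"
  proof (rule inj_onI)
    fix i j assume i: "i \<in> {0..<t}" and j: "j \<in> {0..<t}" and eq: "g i = g j"
    have r: "\<And>x y. x < 2*t \<Longrightarrow> y < 2*t \<Longrightarrow> f x = f y \<Longrightarrow> x = y"
      using f(1) by (auto dest: inj_onD)
    have it: "2*i < 2*t" "2*i+1 < 2*t" "2*j < 2*t" "2*j+1 < 2*t" using i j by auto
    show "i = j"
    proof (cases "f (2*i) \<in> S")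
      case True
      then have gi: "g i = f (2*i)" by (simp add: g_def)
      show ?thesis
      proof (cases "f (2*j) \<in> S")
        case True
        then have "g j = f (2*j)" by (simp add: g_def)
        then have "2*i = 2*j" using r it gi eq by metis
        then show ?thesis by simp
      next
        case False
        then have "g j = f (2*j+1)" by (simp add: g_def)
        then have "2*i = 2*j+1" using r it gi eq by metis
        then show ?thesis by presburger
      qed
    next
      case False
      then have gi: "g i = f (2*i+1)" by (simp add: g_def)
      show ?thesis
      proof (cases "f (2*j) \<in> S")
        case True
        then have "g j = f (2*j)" by (simp add: g_def)
        then have "2*i+1 = 2*j" using r it gi eq by metis
        then show ?thesis by presburger
      next
        case False
        then have "g j = f (2*j+1)" by (simp add: g_def)
        then have "2*i+1 = 2*j+1" using r it gi eq by metis
        then show ?thesis by simp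
      qed
    qed
  qed
  hence "card {0..<t} \<le> card S"
    using card_inj_on_le[of g "{0..<t}" S] gS assms(1) by (auto simp: image_subset_iff)
  thus False using assms(2) by simp
qed

lemma lower:
  fixes F :: "'b graph" and G :: "'a graph"
  assumes sF: "simple_graph F" and sG: "simple_graph G" and neG: "edges G \<noteq> {}"
    and arr: "arrows F (matching t) G" and t: "t \<ge> 1"
  shows "(t-1) * max_degree G + card (edges G) \<le> card (edges F)"
proof -
  have finE: "finite (edges F)" using finite_edges[OF sF] .
  have blue: "has_copy G (verts F) (edges F - inc (edges F) S)" if "finite S" "card S < t" for S
  proof -
    have "inc (edges F) S \<subseteq> edges F" unfolding inc_def by auto
    then have "has_copy (matching t) (verts F) (inc (edges F) S) \<or> has_copy G (verts F) (edges F - inc (edges F) S)"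
      using arr unfolding arrows_def by blast
    then show ?thesis using no_red_matching[OF that] by blast
  qed
  obtain v where v: "v \<in> verts G" "degree G v = max_degree G" using max_deg_ex[OF sG neG] by blast
  have ind: "k \<le> t - 1 \<Longrightarrow> \<exists>S. finite S \<and> card S \<le> k \<and> k * max_degree G \<le> card (inc (edges F) S)" for k
  proof (induction k)
    case 0 show ?case by (intro exI[of _ "{}"]) simp
  next
    case (Suc k)
    then obtain S where S: "finite S" "card S \<le> k" "k * max_degree G \<le> card (inc (edges F) S)"
      by auto
    have "card S < t" using S(2) Suc.prems by linarith
    then obtain w where w: "max_degree G \<le> card {e\<in>edges F - inc (edges F) S. w \<in> e}"
      using copy_deg[OF sG blue[OF S(1)] _ v(1)] finE v(2) by auto
    define B where "B = {e\<in>edges F - inc (edges F) S. w \<in> e}"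
    have eq: "inc (edges F) (insert w S) = inc (edges F) S \<union> B"
      unfolding inc_def B_def by auto
    have disj: "inc (edges F) S \<inter> B = {}" unfolding B_def by auto
    have fin: "finite (inc (edges F) S)" "finite B" using finE unfolding inc_def B_def by auto
    have "card (inc (edges F) (insert w S)) = card (inc (edges F) S) + card B"
      using eq disj fin card_Un_disjoint by metis
    moreover have "card (insert w S) \<le> Suc (card S)" by (simp add: card_insert_if S(1))
    hence "card (insert w S) \<le> Suc k" using S(2) by linarith
    moreover have "finite (insert w S)" using S(1) by simp
    moreover have "Suc k * max_degree G \<le> card (inc (edges F) S) + card B"
      using S(3) w unfolding B_def by simp
    ultimately show ?case by metis
  qed
  obtain S where S: "finite S" "card S \<le> t - 1" "(t-1) * max_degree G \<le> card (inc (edges F) S)"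
    using ind by blast
  have "card S < t" using S(2) t by linarith
  hence c2: "card (edges G) \<le> card (edges F - inc (edges F) S)"
    using copy_edges[OF sG blue[OF S(1)]] finE by auto
  have "card (edges F) = card (inc (edges F) S) + card (edges F - inc (edges F) S)"
  proof -
    have sub: "inc (edges F) S \<subseteq> edges F" unfolding inc_def by auto
    have "finite (inc (edges F) S)" using finE sub finite_subset by blast
    then have "card (edges F - inc (edges F) S) = card (edges F) - card (inc (edges F) S)"
      using card_Diff_subset sub by blast
    moreover have "card (inc (edges F) S) \<le> card (edges F)" using card_mono[OF finE sub] .
    ultimately show ?thesis by linarith
  qed
  thus ?thesis using S(3) c2 by linarith
qed



definition relabel :: "('a \<Rightarrow> 'b) \<Rightarrow> 'a graph \<Rightarrow> 'b graph" where
  "relabel h F = (h ` verts F, (image h) ` edges F)"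

lemma verts_relabel[simp]: "verts (relabel h F) = h ` verts F"
  by (simp add: relabel_def verts_def)
lemma edges_relabel[simp]: "edges (relabel h F) = (image h) ` edges F"
  by (simp add: relabel_def edges_def)

lemma relabel_simple:
  assumes "inj h" "simple_graph F" shows "simple_graph (relabel h F)"
  unfolding simple_graph_def
proof (intro conjI ballI)
  show "finite (verts (relabel h F))" using assms(2) unfolding simple_graph_def by simp
next
  fix e assume "e \<in> edges (relabel h F)"
  then obtain e0 where e0: "e0 \<in> edges F" "e = h ` e0" by auto
  then obtain u v where uv: "u \<noteq> v" "u \<in> verts F" "v \<in> verts F" "e0 = {u, v}"
    using assms(2) unfolding simple_graph_def by metis
  have "h u \<noteq> h v" using uv(1) assms(1) by (simp add: inj_eq)
  then show "\<exists>u v. u \<noteq> v \<and> u \<in> verts (relabel h F) \<and> v \<in> verts (relabel h F) \<and> e = {u, v}"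
    using uv e0 by (intro exI[of _ "h u"] exI[of _ "h v"]) auto
qed

lemma relabel_card:
  assumes "inj h" shows "card (edges (relabel h F)) = card (edges F)"
proof -
  have "inj_on (image h) (edges F)"
    by (auto simp: inj_on_def inj_image_eq_iff[OF assms])
  then show ?thesis by (simp add: card_image)
qed

lemma relabel_arrows:
  assumes h: "inj h" and arr: "arrows F H G"
  shows "arrows (relabel h F) H G"
  unfolding arrows_def
proof (intro allI impI)
  fix R' assume R': "R' \<subseteq> edges (relabel h F)"
  define R where "R = {e \<in> edges F. h ` e \<in> R'}"
  have "R \<subseteq> edges F" unfolding R_def by auto
  then have "has_copy H (verts F) R \<or> has_copy G (verts F) (edges F - R)"
    using arr unfolding arrows_def by blast
  then show "has_copy H (verts (relabel h F)) R' \<or> has_copy G (verts (relabel h F)) (edges (relabel h F) - R')"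
  proof
    assume "has_copy H (verts F) R"
    then obtain f where f: "inj_on f (verts H)" "f ` verts H \<subseteq> verts F" "\<forall>e\<in>edges H. f ` e \<in> R"
      unfolding has_copy_def by blast
    have "inj_on (h \<circ> f) (verts H)" using f(1) h by (intro comp_inj_on inj_on_subset[OF h subset_UNIV])
    moreover have "(h \<circ> f) ` verts H \<subseteq> verts (relabel h F)" using f(2) by (auto simp: image_comp)
    moreover have "\<forall>e\<in>edges H. (h \<circ> f) ` e \<in> R'" using f(3) unfolding R_def by (auto simp: image_comp)
    ultimately show ?thesis unfolding has_copy_def by blast
  next
    assume "has_copy G (verts F) (edges F - R)"
    then obtain f where f: "inj_on f (verts G)" "f ` verts G \<subseteq> verts F" "\<forall>e\<in>edges G. f ` e \<in> edges F - R"
      unfolding has_copy_def by blast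
    have "inj_on (h \<circ> f) (verts G)" using f(1) h by (intro comp_inj_on inj_on_subset[OF h subset_UNIV])
    moreover have "(h \<circ> f) ` verts G \<subseteq> verts (relabel h F)" using f(2) by (auto simp: image_comp)
    moreover have "\<forall>e\<in>edges G. (h \<circ> f) ` e \<in> edges (relabel h F) - R'"
    proof
      fix e assume e: "e \<in> edges G"
      have "f ` e \<in> edges F" "f ` e \<notin> R" using f(3) e by auto
      then show "(h \<circ> f) ` e \<in> edges (relabel h F) - R'"
        unfolding R_def by (auto simp: image_comp)
    qed
    ultimately show ?thesis unfolding has_copy_def by blast
  qed
qed

definition gunion :: "'a graph \<Rightarrow> 'a graph \<Rightarrow> 'a graph" where
  "gunion F1 F2 = (verts F1 \<union> verts F2, edges F1 \<union> edges F2)"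

lemma verts_gunion[simp]: "verts (gunion F1 F2) = verts F1 \<union> verts F2"
  by (simp add: gunion_def verts_def)
lemma edges_gunion[simp]: "edges (gunion F1 F2) = edges F1 \<union> edges F2"
  by (simp add: gunion_def edges_def)

lemma gunion_simple:
  assumes "simple_graph F1" "simple_graph F2" shows "simple_graph (gunion F1 F2)"
  unfolding simple_graph_def
proof (intro conjI ballI)
  show "finite (verts (gunion F1 F2))" using assms unfolding simple_graph_def by simp
next
  fix e assume "e \<in> edges (gunion F1 F2)"
  then have "e \<in> edges F1 \<or> e \<in> edges F2" by simp
  then show "\<exists>u v. u \<noteq> v \<and> u \<in> verts (gunion F1 F2) \<and> v \<in> verts (gunion F1 F2) \<and> e = {u, v}"
  proof
    assume "e \<in> edges F1"
    then obtain u v where "u \<noteq> v" "u \<in> verts F1" "v \<in> verts F1" "e = {u, v}"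
      using assms(1) unfolding simple_graph_def by metis
    then show ?thesis by auto
  next
    assume "e \<in> edges F2"
    then obtain u v where "u \<noteq> v" "u \<in> verts F2" "v \<in> verts F2" "e = {u, v}"
      using assms(2) unfolding simple_graph_def by metis
    then show ?thesis by auto
  qed
qed

lemma gunion_card:
  assumes "simple_graph F1" "simple_graph F2" "verts F1 \<inter> verts F2 = {}"
  shows "card (edges (gunion F1 F2)) = card (edges F1) + card (edges F2)"
proof -
  have "edges F1 \<inter> edges F2 = {}"
  proof (rule ccontr)
    assume "edges F1 \<inter> edges F2 \<noteq> {}"
    then obtain e where e: "e \<in> edges F1" "e \<in> edges F2" by blast
    then obtain u v where uv: "u \<noteq> v" "u \<in> verts F1" "v \<in> verts F1" "e = {u, v}"
      using assms(1) unfolding simple_graph_def by metis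
    have "e \<in> Pow (verts F2)" using e(2) edges_sub_pow[OF assms(2)] by blast
    then have "u \<in> verts F2" using uv(4) by simp
    then show False using assms(3) uv(2) by blast
  qed
  then show ?thesis using finite_edges[OF assms(1)] finite_edges[OF assms(2)]
    by (simp add: card_Un_disjoint)
qed

lemma has_copy_mono: "has_copy H V E \<Longrightarrow> V \<subseteq> V' \<Longrightarrow> E \<subseteq> E' \<Longrightarrow> has_copy H V' E'"
proof -
  assume a: "has_copy H V E" "V \<subseteq> V'" "E \<subseteq> E'"
  then obtain f where "inj_on f (verts H)" "f ` verts H \<subseteq> V" "\<forall>e\<in>edges H. f ` e \<in> E"
    unfolding has_copy_def by blast
  then show ?thesis unfolding has_copy_def using a(2,3) by (intro exI[of _ f]) auto
qed

lemma gunion_arrows: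
  assumes a1: "arrows F1 (matching s) G" and a2: "arrows F2 (matching t) G"
    and d: "verts F1 \<inter> verts F2 = {}"
  shows "arrows (gunion F1 F2) (matching (s+t)) G"
  unfolding arrows_def
proof (intro allI impI)
  fix R assume R: "R \<subseteq> edges (gunion F1 F2)"
  have c1: "has_copy (matching s) (verts F1) (R \<inter> edges F1) \<or> has_copy G (verts F1) (edges F1 - R \<inter> edges F1)"
    using a1 unfolding arrows_def by blast
  have c2: "has_copy (matching t) (verts F2) (R \<inter> edges F2) \<or> has_copy G (verts F2) (edges F2 - R \<inter> edges F2)"
    using a2 unfolding arrows_def by blast
  show "has_copy (matching (s+t)) (verts (gunion F1 F2)) R \<or> has_copy G (verts (gunion F1 F2)) (edges (gunion F1 F2) - R)"
  proof (cases "has_copy G (verts F1) (edges F1 - R \<inter> edges F1) \<or> has_copy G (verts F2) (edges F2 - R \<inter> edges F2)")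
    case True
    then show ?thesis
    proof
      assume "has_copy G (verts F1) (edges F1 - R \<inter> edges F1)"
      then have "has_copy G (verts (gunion F1 F2)) (edges (gunion F1 F2) - R)"
        by (rule has_copy_mono) auto
      then show ?thesis by blast
    next
      assume "has_copy G (verts F2) (edges F2 - R \<inter> edges F2)"
      then have "has_copy G (verts (gunion F1 F2)) (edges (gunion F1 F2) - R)"
        by (rule has_copy_mono) auto
      then show ?thesis by blast
    qed
  next
    case False
    then have r1: "has_copy (matching s) (verts F1) (R \<inter> edges F1)"
      and r2: "has_copy (matching t) (verts F2) (R \<inter> edges F2)" using c1 c2 by blast+
    obtain f1 where f1: "inj_on f1 {0..<2*s}" "f1 ` {0..<2*s} \<subseteq> verts F1"
      "\<forall>i<s. f1 ` {2*i, 2*i+1} \<in> R \<inter> edges F1"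
    proof -
      obtain f where a: "inj_on f {0..<2*s}" "f ` {0..<2*s} \<subseteq> verts F1"
        "\<forall>e\<in>{{2*i, 2*i+1} | i. i < s}. f ` e \<in> R \<inter> edges F1"
        using r1 unfolding has_copy_def by auto
      have "\<forall>i<s. f ` {2*i, 2*i+1} \<in> R \<inter> edges F1" using a(3) by blast
      then show ?thesis using that a(1,2) by blast
    qed
    obtain f2 where f2: "inj_on f2 {0..<2*t}" "f2 ` {0..<2*t} \<subseteq> verts F2"
      "\<forall>i<t. f2 ` {2*i, 2*i+1} \<in> R \<inter> edges F2"
    proof -
      obtain f where a: "inj_on f {0..<2*t}" "f ` {0..<2*t} \<subseteq> verts F2"
        "\<forall>e\<in>{{2*i, 2*i+1} | i. i < t}. f ` e \<in> R \<inter> edges F2"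
        using r2 unfolding has_copy_def by auto
      have "\<forall>i<t. f ` {2*i, 2*i+1} \<in> R \<inter> edges F2" using a(3) by blast
      then show ?thesis using that a(1,2) by blast
    qed
    define f where "f i = (if i < 2*s then f1 i else f2 (i - 2*s))" for i
    have inj: "inj_on f {0..<2*(s+t)}"
    proof (rule inj_onI)
      fix x y assume x: "x \<in> {0..<2*(s+t)}" and y: "y \<in> {0..<2*(s+t)}" and eq: "f x = f y"
      show "x = y"
      proof (cases "x < 2*s")
        case xs: True
        show ?thesis
        proof (cases "y < 2*s")
          case True
          then show ?thesis using xs eq f1(1) unfolding f_def by (auto dest: inj_onD)
        next
          case False
          have "f1 x \<in> verts F1" using f1(2) xs by auto
          moreover have "f2 (y - 2*s) \<in> verts F2" using f2(2) False y by auto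
          ultimately show ?thesis using xs False eq d unfolding f_def by auto
        qed
      next
        case xs: False
        show ?thesis
        proof (cases "y < 2*s")
          case True
          have "f1 y \<in> verts F1" using f1(2) True by auto
          moreover have "f2 (x - 2*s) \<in> verts F2" using f2(2) xs x by auto
          ultimately show ?thesis using xs True eq d unfolding f_def by auto
        next
          case False
          have "x - 2*s = y - 2*s"
            using xs False eq f2(1) x y unfolding f_def by (auto dest: inj_onD)
          then show ?thesis using xs False by simp
        qed
      qed
    qed
    have img: "f ` {0..<2*(s+t)} \<subseteq> verts F1 \<union> verts F2"
    proof
      fix z assume "z \<in> f ` {0..<2*(s+t)}"
      then obtain x where x: "x < 2*(s+t)" "z = f x" by auto
      show "z \<in> verts F1 \<union> verts F2"
      proof (cases "x < 2*s")
        case True then show ?thesis using f1(2) x unfolding f_def by auto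
      next
        case False
        then have "x - 2*s \<in> {0..<2*t}" using x by auto
        then have "f2 (x - 2*s) \<in> verts F2" using f2(2) by blast
        then show ?thesis using False x unfolding f_def by auto
      qed
    qed
    have ed: "f ` {2*i, 2*i+1} \<in> R" if i: "i < s+t" for i
    proof (cases "i < s")
      case True
      then have "f ` {2*i, 2*i+1} = f1 ` {2*i, 2*i+1}" unfolding f_def by auto
      then show ?thesis using f1(3) True by auto
    next
      case False
      have e1: "Suc (2*i) - 2*s = Suc (2*i - 2*s)" using False by simp
      have "f ` {2*i, 2*i+1} = f2 ` {2*(i-s), 2*(i-s)+1}" unfolding f_def
        using False by (auto simp: diff_mult_distrib2 e1)
      then show ?thesis using f2(3) False i by auto
    qed
    have "has_copy (matching (s+t)) (verts (gunion F1 F2)) R"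
      unfolding has_copy_def using inj img ed by auto
    then show ?thesis by blast
  qed
qed

lemma combine:
  fixes F1 F2 :: "nat graph"
  assumes "simple_graph F1" "simple_graph F2" "arrows F1 (matching s) G" "arrows F2 (matching t) G"
  shows "\<exists>F :: nat graph. simple_graph F \<and> arrows F (matching (s+t)) G \<and>
           card (edges F) = card (edges F1) + card (edges F2)"
proof -
  define N where "N = Suc (Max (insert 0 (verts F1)))"
  have fin: "finite (verts F1)" using assms(1) unfolding simple_graph_def by simp
  have lt: "x < N" if "x \<in> verts F1" for x
    unfolding N_def using fin that by (simp add: le_imp_less_Suc)
  define F2' where "F2' = relabel (\<lambda>x. x + N) F2"
  have inj: "inj (\<lambda>x::nat. x + N)" by (simp add: inj_on_def)
  have s2: "simple_graph F2'" unfolding F2'_def using relabel_simple[OF inj assms(2)] .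
  have a2: "arrows F2' (matching t) G" unfolding F2'_def using relabel_arrows[OF inj assms(4)] .
  have c2: "card (edges F2') = card (edges F2)" unfolding F2'_def using relabel_card[OF inj] .
  have d: "verts F1 \<inter> verts F2' = {}" unfolding F2'_def using lt by fastforce
  show ?thesis
    using gunion_simple[OF assms(1) s2] gunion_arrows[OF assms(3) a2 d] gunion_card[OF assms(1) s2 d] c2
    by (intro exI[of _ "gunion F1 F2'"]) simp
qed

lemma exists_one:
  fixes G :: "'a graph"
  assumes sG: "simple_graph G"
  shows "\<exists>F :: nat graph. simple_graph F \<and> arrows F (matching 1) G"
proof -
  have fin: "finite (verts G)" using sG unfolding simple_graph_def by simp
  obtain h :: "'a \<Rightarrow> nat" where h: "bij_betw h (verts G) {0..<card (verts G)}"
    using ex_bij_betw_finite_nat[OF fin] by blast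
  have hi: "inj_on h (verts G)" using h bij_betw_imp_inj_on by blast
  define F where "F = (h ` verts G, (image h) ` edges G)"
  have vF: "verts F = h ` verts G" and eF: "edges F = (image h) ` edges G"
    unfolding F_def verts_def edges_def by simp_all
  have sF: "simple_graph F"
    unfolding simple_graph_def
  proof (intro conjI ballI)
    show "finite (verts F)" using fin vF by simp
  next
    fix e assume "e \<in> edges F"
    then obtain e0 where e0: "e0 \<in> edges G" "e = h ` e0" using eF by auto
    then obtain u v where uv: "u \<noteq> v" "u \<in> verts G" "v \<in> verts G" "e0 = {u, v}"
      using sG unfolding simple_graph_def by metis
    have "h u \<noteq> h v" using uv hi by (metis inj_onD)
    then show "\<exists>u v. u \<noteq> v \<and> u \<in> verts F \<and> v \<in> verts F \<and> e = {u, v}"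
      using uv e0 vF by (intro exI[of _ "h u"] exI[of _ "h v"]) auto
  qed
  have "arrows F (matching 1) G"
    unfolding arrows_def
  proof (intro allI impI)
    fix R assume R: "R \<subseteq> edges F"
    show "has_copy (matching 1) (verts F) R \<or> has_copy G (verts F) (edges F - R)"
    proof (cases "R = {}")
      case True
      have "has_copy G (verts F) (edges F - R)"
        unfolding has_copy_def using hi vF eF True by (intro exI[of _ h]) auto
      then show ?thesis by blast
    next
      case False
      then obtain e where e: "e \<in> R" by blast
      have eF': "e \<in> edges F" using R e by blast
      then obtain a b where ab: "a \<noteq> b" "a \<in> verts F" "b \<in> verts F" "e = {a, b}"
        using sF unfolding simple_graph_def by metis
      define f where "f i = (if i = 0 then a else b)" for i :: nat
      have "inj_on f {0..<2*1}" unfolding f_def using ab(1) by (auto simp: inj_on_def)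
      moreover have "f ` {0..<2*1} \<subseteq> verts F" unfolding f_def using ab by auto
      moreover have "\<forall>e'\<in>edges (matching 1). f ` e' \<in> R"
      proof
        fix e' assume "e' \<in> edges (matching 1)"
        then have "e' = {0, 1}" by auto
        then have "f ` e' = {a, b}" unfolding f_def by auto
        then show "f ` e' \<in> R" using e ab by simp
      qed
      ultimately have "has_copy (matching 1) (verts F) R"
        unfolding has_copy_def by (intro exI[of _ f]) simp
      then show ?thesis by blast
    qed
  qed
  then show ?thesis using sF by blast
qed

lemma exists_t:
  fixes G :: "'a graph"
  assumes sG: "simple_graph G"
  shows "\<exists>F :: nat graph. simple_graph F \<and> arrows F (matching t) G"
proof (induction t)
  case 0
  have "simple_graph ({}, {})" unfolding simple_graph_def verts_def edges_def by simp
  moreover have "arrows ({}, {}) (matching 0) G"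
    unfolding arrows_def has_copy_def by simp
  ultimately show ?case by blast
next
  case (Suc t)
  then obtain F1 :: "nat graph" where F1: "simple_graph F1" "arrows F1 (matching t) G" by blast
  obtain F0 :: "nat graph" where F0: "simple_graph F0" "arrows F0 (matching 1) G" using exists_one[OF sG] by blast
  show ?case using combine[OF F1(1) F0(1) F1(2) F0(2)] by auto
qed



theorem proposition3p2:
  fixes G :: "'a graph"
  assumes "simple_graph G" and "edges G \<noteq> {}"
  shows "(\<forall>t::nat. t \<ge> 1 \<longrightarrow>
            size_ramsey (matching t) G \<ge> (t - 1) * max_degree G + card (edges G))
         \<and> rhat_inf G \<ge> real (max_degree G) / real (card (edges G))"
proof -
  define a where "a t = size_ramsey (matching t) G" for t
  have attain: "\<exists>F :: nat graph. simple_graph F \<and> card (edges F) = a t \<and> arrows F (matching t) G" for t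
  proof -
    obtain F :: "nat graph" where "simple_graph F" "arrows F (matching t) G"
      using exists_t[OF assms(1)] by blast
    then have "\<exists>m. \<exists>F :: nat graph. simple_graph F \<and> card (edges F) = m \<and> arrows F (matching t) G"
      by blast
    then show ?thesis unfolding a_def size_ramsey_def by (rule LeastI_ex)
  qed
  have sub: "a (m+n) \<le> a m + a n" for m n
  proof -
    obtain F1 :: "nat graph" where F1: "simple_graph F1" "card (edges F1) = a m" "arrows F1 (matching m) G"
      using attain by blast
    obtain F2 :: "nat graph" where F2: "simple_graph F2" "card (edges F2) = a n" "arrows F2 (matching n) G"
      using attain by blast
    obtain F :: "nat graph" where F: "simple_graph F" "arrows F (matching (m+n)) G"
      "card (edges F) = a m + a n"
      using combine[OF F1(1) F2(1) F1(3) F2(3)] F1(2) F2(2) by auto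
    then show ?thesis unfolding a_def size_ramsey_def by (intro Least_le) blast
  qed
  have low: "(t - 1) * max_degree G + card (edges G) \<le> a t" if "t \<ge> 1" for t
  proof -
    obtain F :: "nat graph" where F: "simple_graph F" "card (edges F) = a t" "arrows F (matching t) G"
      using attain by blast
    show ?thesis using lower[OF F(1) assms(1) assms(2) F(3) that] F(2) by simp
  qed
  define e where "e = card (edges G)"
  define D where "D = max_degree G"
  have De: "D \<le> e" unfolding D_def e_def using max_deg_le[OF assms] .
  have e0: "e > 0" unfolding e_def using assms(2) finite_edges[OF assms(1)] by (simp add: card_gt_0_iff)
  obtain L where L: "(\<lambda>n. real (a n) / real n) \<longlonglongrightarrow> L"
    using fekete[of a] sub unfolding convergent_def by blast
  have eqf: "(\<lambda>t. real (size_ramsey (matching t) G) / (real t * real (card (edges G))))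
      = (\<lambda>t. (real (a t) / real t) / real e)"
    unfolding a_def e_def by (simp add: divide_divide_eq_left)
  have L2: "(\<lambda>t. (real (a t) / real t) / real e) \<longlonglongrightarrow> L / real e"
    by (intro tendsto_divide L tendsto_const) (use e0 in simp)
  have rh: "rhat_inf G = L / real e"
    unfolding rhat_inf_def eqf using L2 by (rule limI)
  have bnd: "real D / real e \<le> (real (a t) / real t) / real e" if "t \<ge> 1" for t
  proof -
    have tD: "t * D = (t-1)*D + D" using that by (cases t) auto
    have "(t - 1) * D + e \<le> a t" using low[OF that] unfolding D_def e_def .
    hence "t * D \<le> a t" using tD De by linarith
    hence "real t * real D \<le> real (a t)" by (metis of_nat_le_iff of_nat_mult)
    hence "real D \<le> real (a t) / real t" using that by (simp add: field_simps)
    thus ?thesis using e0 by (intro divide_right_mono) auto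
  qed
  have "real D / real e \<le> L / real e"
    using L2 by (rule LIMSEQ_le_const) (use bnd in blast)
  then show ?thesis using low rh unfolding a_def D_def e_def by simp
qed

end
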